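(* Consider a series system (so $\phi(s)=1$ if and only if $s_k=1$ for all $k$), with an arbitrary joint prior distribution of the component states and with inspection error rates $\epsilon_{FA},\epsilon_{FS}\in[0,1/2)$ identical for all components. For any two components $c_i,c_j$ with $p_i\ge p_j$, we have $I_i\supseteq I_j$, i.e. $p_{\omega|y_i=1}\le p_{\omega|y_j=1}\le p_{\omega|y_j=0}\le p_{\omega|y_i=0}$, and consequently $\mathrm{VoI}_G(i)\ge\mathrm{VoI}_G(j)$ for every concave function $l^*$. In particular, the most vulnerable component (the one with the highest marginal failure probability) has the highest $\mathrm{VoI}_G$, regardless of $l^*$.
   Context: A system consists of $N$ binary components $c_1,\dots,c_N$ with random joint state $s=(s_1,\dots,s_N)\in\{0,1\}^N$ ($s_k=1$: working; $s_k=0$: failed), with arbitrary prior distribution $p_s$. The system state is $u=\phi(s)$ ($u=0$: system failure), $p_\pi=\mathbb{P}[u=0]$, and $p_k=\mathbb{P}[s_k=0]$ is the marginal failure probability of $c_k$. Inspecting $c_k$ yields a binary observation $y_k$ (alarm $y_k=0$, silence $y_k=1$) which, given $s$, depends only on $s_k$, with $\mathbb{P}[y_k=1\mid s_k=0]=\epsilon_{FS}$ and $\mathbb{P}[y_k=0\mid s_k=1]=\epsilon_{FA}$. Then $h_k=\mathbb{P}[y_k=0]=\epsilon_{FA}+(1-\epsilon_{FA}-\epsilon_{FS})p_k$; posterior system failure probabilities are $p_{\omega|y_k=b}=\mathbb{P}[u=0\mid y_k=b]$ (defined when the conditioning event has positive probability), and $I_k=[p_{\omega|y_k=1},p_{\omega|y_k=0}]$.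 Global metric: for a concave $l^*:[0,1]\to\mathbb{R}$, $L^G_\pi=l^*(p_\pi)$, $L^G_\omega(k)=h_k\,l^*(p_{\omega|y_k=0})+(1-h_k)\,l^*(p_{\omega|y_k=1})$ (a term with zero probability is omitted), and $\mathrm{VoI}_G(k)=L^G_\pi-L^G_\omega(k)$. *)

theory Defs
  imports "HOL-Probability.Probability"
begin

(* Components are indexed by a finite type 'c (N = CARD('c)).
   A joint state is s :: 'c \<Rightarrow> bool, with s k = True meaning c_k works (s_k = 1).  A structure function
   phi :: ('c \<Rightarrow> bool) \<Rightarrow> bool gives the system state (True = working, u = 1).
   An observation value b :: bool encodes y_k (b = False: alarm y_k = 0; b = True: silence y_k = 1). *)

definition series :: "('c \<Rightarrow> bool) \<Rightarrow> bool" where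
  "series s = (\<forall>k. s k)"

(* P[y_k = b | s_k] *)
definition obs_lik :: "real \<Rightarrow> real \<Rightarrow> bool \<Rightarrow> bool \<Rightarrow> real" where
  "obs_lik eFA eFS sk b =
     (if b then (if sk then 1 - eFA else eFS) else (if sk then eFA else 1 - eFS))"

definition p_comp :: "('c \<Rightarrow> bool) pmf \<Rightarrow> 'c \<Rightarrow> real" where
  "p_comp P k = measure_pmf.prob P {s. \<not> s k}"

definition p_sys :: "(('c \<Rightarrow> bool) \<Rightarrow> bool) \<Rightarrow> ('c \<Rightarrow> bool) pmf \<Rightarrow> real" where
  "p_sys phi P = measure_pmf.prob P {s. \<not> phi s}"

definition obs_prob :: "('c::finite \<Rightarrow> bool) pmf \<Rightarrow> real \<Rightarrow> real \<Rightarrow> 'c \<Rightarrow> bool \<Rightarrow> real" where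
  "obs_prob P eFA eFS k b = (\<Sum>s\<in>UNIV. pmf P s * obs_lik eFA eFS (s k) b)"

definition joint_fail_obs :: "(('c::finite \<Rightarrow> bool) \<Rightarrow> bool) \<Rightarrow> ('c \<Rightarrow> bool) pmf
    \<Rightarrow> real \<Rightarrow> real \<Rightarrow> 'c \<Rightarrow> bool \<Rightarrow> real" where
  "joint_fail_obs phi P eFA eFS k b =
     (\<Sum>s\<in>{s. \<not> phi s}. pmf P s * obs_lik eFA eFS (s k) b)"

definition h_comp :: "('c::finite \<Rightarrow> bool) pmf \<Rightarrow> real \<Rightarrow> real \<Rightarrow> 'c \<Rightarrow> real" where
  "h_comp P eFA eFS k = obs_prob P eFA eFS k False"

(* p_{omega | y_k = b} = P[u = 0 | y_k = b]  (meaningful only when P[y_k = b] > 0) *)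
definition post_fail :: "(('c::finite \<Rightarrow> bool) \<Rightarrow> bool) \<Rightarrow> ('c \<Rightarrow> bool) pmf
    \<Rightarrow> real \<Rightarrow> real \<Rightarrow> 'c \<Rightarrow> bool \<Rightarrow> real" where
  "post_fail phi P eFA eFS k b = joint_fail_obs phi P eFA eFS k b / obs_prob P eFA eFS k b"

(* L^G_omega(k); terms with zero probability are omitted *)
definition LG_post :: "(real \<Rightarrow> real) \<Rightarrow> (('c::finite \<Rightarrow> bool) \<Rightarrow> bool) \<Rightarrow> ('c \<Rightarrow> bool) pmf
    \<Rightarrow> real \<Rightarrow> real \<Rightarrow> 'c \<Rightarrow> real" where
  "LG_post l phi P eFA eFS k =
     (let h = h_comp P eFA eFS k in
       (if h \<noteq> 0 then h * l (post_fail phi P eFA eFS k False) else 0)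
     + (if 1 - h \<noteq> 0 then (1 - h) * l (post_fail phi P eFA eFS k True) else 0))"

definition VoI_G :: "(real \<Rightarrow> real) \<Rightarrow> (('c::finite \<Rightarrow> bool) \<Rightarrow> bool) \<Rightarrow> ('c \<Rightarrow> bool) pmf
    \<Rightarrow> real \<Rightarrow> real \<Rightarrow> 'c \<Rightarrow> real" where
  "VoI_G l phi P eFA eFS k = l (p_sys phi P) - LG_post l phi P eFA eFS k"

end

theory Submission
  imports Defs
begin


lemma chord:
  fixes l :: "real \<Rightarrow> real"
  assumes cc: "concave_on {0..1} l" and "0 \<le> a" "a \<le> u" "u \<le> b" "b \<le> 1"
  shows "(b - u) * l a + (u - a) * l b \<le> (b - a) * l u"
proof (cases "a = b")
  case True then show ?thesis using assms by simp
next
  case False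
  define t where "t = (u - a) / (b - a)"
  have ba: "b - a > 0" using False assms by simp
  have t0: "0 \<le> t" "t \<le> 1" using assms ba by (auto simp: t_def field_simps)
  have tb: "t * (b - a) = u - a" using ba by (simp add: t_def)
  have ueq: "u = (1 - t) * a + t * b"
  proof -
    have "(1 - t) * a + t * b = a + t * (b - a)" by (simp add: algebra_simps)
    then show ?thesis using tb by simp
  qed
  have "(1 - t) * l a + t * l b \<le> l ((1 - t) *\<^sub>R a + t *\<^sub>R b)"
    by (rule concave_onD[OF cc t0]) (use assms in auto)
  hence "(1 - t) * l a + t * l b \<le> l u" using ueq by simp
  hence "(b - a) * ((1 - t) * l a + t * l b) \<le> (b - a) * l u"
    using ba by (simp add: mult_left_mono)
  moreover have "(b - a) * ((1 - t) * l a + t * l b) = (b - u) * l a + (u - a) * l b"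
  proof -
    have "(b - a) * ((1 - t) * l a + t * l b) = ((b - a) - t * (b - a)) * l a + (t * (b - a)) * l b"
      by (simp add: algebra_simps)
    then show ?thesis using tb by simp
  qed
  ultimately show ?thesis by simp
qed

lemma jensen2:
  fixes l :: "real \<Rightarrow> real"
  assumes cc: "concave_on {0..1} l" and "0 \<le> a" "b \<le> 1"
    "a \<le> u" "u \<le> b" "a \<le> v" "v \<le> b" "0 \<le> w" "w \<le> 1" "w * u + (1 - w) * v = p"
    "lam * b + (1 - lam) * a = p"
  shows "lam * l b + (1 - lam) * l a \<le> w * l u + (1 - w) * l v"
proof (cases "a = b")
  case True
  then have "u = a" "v = a" using assms by auto
  then show ?thesis using True by (simp add: algebra_simps)
next
  case False
  have ba: "b - a > 0" using False assms by simp
  have c1: "(b - u) * l a + (u - a) * l b \<le> (b - a) * l u" by (rule chord) (use assms in auto)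
  have c2: "(b - v) * l a + (v - a) * l b \<le> (b - a) * l v" by (rule chord) (use assms in auto)
  have "w * ((b - u) * l a + (u - a) * l b) + (1 - w) * ((b - v) * l a + (v - a) * l b)
        \<le> w * ((b - a) * l u) + (1 - w) * ((b - a) * l v)"
    using c1 c2 assms by (intro add_mono mult_left_mono) auto
  moreover have "w * ((b - u) * l a + (u - a) * l b) + (1 - w) * ((b - v) * l a + (v - a) * l b)
      = (b - p) * l a + (p - a) * l b"
  proof -
    have "w * ((b - u) * l a + (u - a) * l b) + (1 - w) * ((b - v) * l a + (v - a) * l b)
      = (b - (w * u + (1 - w) * v)) * l a + ((w * u + (1 - w) * v) - a) * l b"
      by (simp add: algebra_simps)
    then show ?thesis using assms(10) by simp
  qed
  moreover have "(b - p) * l a + (p - a) * l b = (b - a) * (lam * l b + (1 - lam) * l a)"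
  proof -
    have "(b - (lam * b + (1 - lam) * a)) * l a + ((lam * b + (1 - lam) * a) - a) * l b = (b - a) * (lam * l b + (1 - lam) * l a)"
      by (simp add: algebra_simps)
    then show ?thesis using assms(11) by simp
  qed
  moreover have "w * ((b - a) * l u) + (1 - w) * ((b - a) * l v) = (b - a) * (w * l u + (1 - w) * l v)"
    by (simp add: algebra_simps)
  ultimately have "(b - a) * (lam * l b + (1 - lam) * l a) \<le> (b - a) * (w * l u + (1 - w) * l v)"
    by linarith
  then show ?thesis using ba by (simp add: mult_le_cancel_left_pos)
qed

lemma cross_le:
  fixes a b c d :: real
  assumes "b > 0" "d > 0" "a * d \<le> c * b"
  shows "a / b \<le> c / d"
  using assms by (simp add: divide_simps mult.commute)

lemma postA_mono:
  fixes eFA eFS p x y :: real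
  assumes "0 \<le> eFA" "0 < 1 - eFA - eFS" "p \<le> 1" "y \<le> x"
    "eFA + (1 - eFA - eFS) * y > 0" "eFA + (1 - eFA - eFS) * x > 0"
  shows "(eFA * p + (1 - eFA - eFS) * y) / (eFA + (1 - eFA - eFS) * y)
      \<le> (eFA * p + (1 - eFA - eFS) * x) / (eFA + (1 - eFA - eFS) * x)"
proof (rule cross_le[OF assms(5,6)])
  define c where "c = 1 - eFA - eFS"
  have "(eFA * p + c * x) * (eFA + c * y) - (eFA * p + c * y) * (eFA + c * x)
        = c * eFA * ((x - y) * (1 - p))"
    by (simp add: algebra_simps)
  moreover have "c * eFA * ((x - y) * (1 - p)) \<ge> 0"
    using assms by (simp add: c_def)
  ultimately show "(eFA * p + (1 - eFA - eFS) * y) * (eFA + (1 - eFA - eFS) * x)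
    \<le> (eFA * p + (1 - eFA - eFS) * x) * (eFA + (1 - eFA - eFS) * y)"
    unfolding c_def by linarith
qed

lemma postB_mono:
  fixes eFA eFS p x y :: real
  assumes "eFA \<le> 1" "0 < 1 - eFA - eFS" "p \<le> 1" "y \<le> x"
    "1 - eFA - (1 - eFA - eFS) * y > 0" "1 - eFA - (1 - eFA - eFS) * x > 0"
  shows "((1 - eFA) * p - (1 - eFA - eFS) * x) / (1 - eFA - (1 - eFA - eFS) * x)
      \<le> ((1 - eFA) * p - (1 - eFA - eFS) * y) / (1 - eFA - (1 - eFA - eFS) * y)"
proof (rule cross_le[OF assms(6,5)])
  define c where "c = 1 - eFA - eFS"
  have "((1 - eFA) * p - c * y) * (1 - eFA - c * x) - ((1 - eFA) * p - c * x) * (1 - eFA - c * y)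
        = c * (1 - eFA) * ((x - y) * (1 - p))"
    by (simp add: algebra_simps)
  moreover have "c * (1 - eFA) * ((x - y) * (1 - p)) \<ge> 0"
    using assms by (simp add: c_def)
  ultimately show "((1 - eFA) * p - (1 - eFA - eFS) * x) * (1 - eFA - (1 - eFA - eFS) * y)
    \<le> ((1 - eFA) * p - (1 - eFA - eFS) * y) * (1 - eFA - (1 - eFA - eFS) * x)"
    unfolding c_def by linarith
qed

lemma postA_ge:
  fixes eFA eFS p y :: real
  assumes "0 \<le> 1 - eFA - eFS" "p \<le> 1" "0 \<le> y" "eFA + (1 - eFA - eFS) * y > 0"
  shows "p \<le> (eFA * p + (1 - eFA - eFS) * y) / (eFA + (1 - eFA - eFS) * y)"
proof -
  define c where "c = 1 - eFA - eFS"
  have "(eFA * p + c * y) - p * (eFA + c * y) = c * y * (1 - p)" by (simp add: algebra_simps)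
  moreover have "c * y * (1 - p) \<ge> 0" using assms by (simp add: c_def)
  ultimately show ?thesis using assms(4) unfolding c_def[symmetric] by (simp add: pos_le_divide_eq mult.commute)
qed

lemma postB_le:
  fixes eFA eFS p y :: real
  assumes "0 \<le> 1 - eFA - eFS" "p \<le> 1" "0 \<le> y" "1 - eFA - (1 - eFA - eFS) * y > 0"
  shows "((1 - eFA) * p - (1 - eFA - eFS) * y) / (1 - eFA - (1 - eFA - eFS) * y) \<le> p"
proof -
  define c where "c = 1 - eFA - eFS"
  have "p * (1 - eFA - c * y) - ((1 - eFA) * p - c * y) = c * y * (1 - p)" by (simp add: algebra_simps)
  moreover have "c * y * (1 - p) \<ge> 0" using assms by (simp add: c_def)
  ultimately show ?thesis using assms(4) unfolding c_def[symmetric] by (simp add: pos_divide_le_eq mult.commute)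
qed

lemma postA_le1:
  fixes eFA eFS p y :: real
  assumes "0 \<le> eFA" "p \<le> 1" "eFA + (1 - eFA - eFS) * y > 0"
  shows "(eFA * p + (1 - eFA - eFS) * y) / (eFA + (1 - eFA - eFS) * y) \<le> 1"
proof -
  have "eFA * p \<le> eFA" using assms by (simp add: mult_left_le)
  then show ?thesis using assms by (simp add: pos_divide_le_eq)
qed

lemma postB_ge0:
  fixes eFA eFS p y :: real
  assumes "0 \<le> eFS" "eFA \<le> 1" "y \<le> p" "0 \<le> y" "1 - eFA - (1 - eFA - eFS) * y > 0"
  shows "0 \<le> ((1 - eFA) * p - (1 - eFA - eFS) * y) / (1 - eFA - (1 - eFA - eFS) * y)"
proof -
  have "(1 - eFA) * y \<le> (1 - eFA) * p" using assms by (simp add: mult_left_mono)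
  moreover have "(1 - eFA) * y - (1 - eFA - eFS) * y = eFS * y" by (simp add: algebra_simps)
  moreover have "eFS * y \<ge> 0" using assms by auto
  ultimately have "(1 - eFA) * p - (1 - eFA - eFS) * y \<ge> 0" by linarith
  then show ?thesis using assms by simp
qed

lemma F_mono:
  fixes l :: "real \<Rightarrow> real" and eFA eFS p x y :: real
  assumes cc: "concave_on {0..1} l" and e: "0 \<le> eFA" "eFA < 1/2" "0 \<le> eFS" "eFS < 1/2"
    and xy: "0 \<le> y" "y \<le> x" "x \<le> p" "p \<le> 1"
  defines "hh \<equiv> \<lambda>z. eFA + (1 - eFA - eFS) * z"
    and "gg \<equiv> \<lambda>z. 1 - eFA - (1 - eFA - eFS) * z"
    and "AA \<equiv> \<lambda>z. eFA * p + (1 - eFA - eFS) * z"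
    and "BB \<equiv> \<lambda>z. (1 - eFA) * p - (1 - eFA - eFS) * z"
  shows "hh x * l (AA x / hh x) + (1 - hh x) * l (BB x / (1 - hh x))
       \<le> hh y * l (AA y / hh y) + (1 - hh y) * l (BB y / (1 - hh y))"
proof -
  define c where "c = 1 - eFA - eFS"
  have c0: "c > 0" using e by (simp add: c_def)
  have g: "\<And>z. 1 - hh z = gg z" by (simp add: hh_def gg_def)
  have sumAB: "\<And>z. AA z + BB z = p" by (simp add: AA_def BB_def algebra_simps)
  have sumh: "\<And>z. hh z + gg z = 1" by (simp add: hh_def gg_def)
  show ?thesis
  proof (cases "x = y")
    case True then show ?thesis by simp
  next
    case False
    then have yx: "y < x" using xy by simp
    have hx: "hh x > 0" using c0 e xy yx unfolding hh_def c_def[symmetric]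
      by (smt (verit) mult_pos_pos)
    have gx0: "gg x \<ge> 0"
    proof -
      have "gg x = eFS + c * (1 - x)" by (simp add: gg_def c_def algebra_simps)
      moreover have "c * (1 - x) \<ge> 0" using c0 xy by simp
      ultimately show ?thesis using e by simp
    qed
    show ?thesis
    proof (cases "gg x = 0")
      case True
      have "eFS + c * (1 - x) = 0" using True by (simp add: gg_def c_def algebra_simps)
      moreover have "c * (1 - x) \<ge> 0" using c0 xy by simp
      ultimately have "c * (1 - x) = 0" "eFS = 0" using e by linarith+
      then have x1: "x = 1" using c0 by simp
      then have p1: "p = 1" using xy by simp
      have hx1: "hh x = 1" using True sumh[of x] by simp
      have "AA x = 1" using p1 x1 \<open>eFS = 0\<close> by (simp add: AA_def)
      then have LHS: "hh x * l (AA x / hh x) + (1 - hh x) * l (BB x / (1 - hh x)) = l 1"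
        using hx1 by simp
      have Ay: "AA y = hh y" using p1 by (simp add: AA_def hh_def)
      have By: "BB y = 1 - hh y" using p1 by (simp add: BB_def hh_def)
      have "hh y * l (AA y / hh y) + (1 - hh y) * l (BB y / (1 - hh y)) = l 1"
        unfolding Ay By
        by (cases "hh y = 0"; cases "1 - hh y = 0") (auto simp: algebra_simps)
      then show ?thesis using LHS by simp
    next
      case False
      then have gx: "gg x > 0" using gx0 by simp
      define a where "a = BB x / gg x"
      define b where "b = AA x / hh x"
      have a0: "0 \<le> a" unfolding a_def BB_def gg_def
        by (rule postB_ge0) (use e xy gx in \<open>auto simp: gg_def\<close>)
      have b1: "b \<le> 1" unfolding b_def AA_def hh_def
        by (rule postA_le1) (use e xy hx in \<open>auto simp: hh_def\<close>)
      have ap: "a \<le> p" unfolding a_def BB_def gg_def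
        by (rule postB_le) (use e xy gx in \<open>auto simp: gg_def\<close>)
      have pb: "p \<le> b" unfolding b_def AA_def hh_def
        by (rule postA_ge) (use e xy hx in \<open>auto simp: hh_def\<close>)
      have lam: "hh x * b + (1 - hh x) * a = p"
        using hx gx sumAB[of x] by (simp add: a_def b_def g)
      have hy0: "hh y \<ge> 0" using e xy c0 unfolding hh_def c_def[symmetric] by simp
      have gy: "gg y > 0"
      proof -
        have "gg y - gg x = c * (x - y)" by (simp add: gg_def c_def algebra_simps)
        moreover have "c * (x - y) > 0" using c0 yx by simp
        ultimately show ?thesis using gx by linarith
      qed
      show ?thesis
      proof (cases "hh y = 0")
        case True
        have cy: "c * y \<ge> 0" using c0 xy by simp
        have "eFA + c * y = 0" using True by (simp add: hh_def c_def)
        then have "eFA = 0" "c * y = 0" using cy e by linarith+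
        then have "AA y = 0" by (simp add: AA_def c_def)
        then have "BB y = p" using sumAB[of y] by simp
        hence R: "hh y * l (AA y / hh y) + (1 - hh y) * l (BB y / (1 - hh y)) = 0 * l p + (1 - 0) * l p"
          using True by simp
        have "hh x * l b + (1 - hh x) * l a \<le> 0 * l p + (1 - 0) * l p"
          by (rule jensen2[OF cc a0 b1]) (use ap pb lam in auto)
        then show ?thesis using R by (simp add: a_def b_def g)
      next
        case False
        then have hy: "hh y > 0" using hy0 by simp
        define u where "u = AA y / hh y"
        define v where "v = BB y / gg y"
        have pu: "p \<le> u" unfolding u_def AA_def hh_def
          by (rule postA_ge) (use e xy hy in \<open>auto simp: hh_def\<close>)
        have vp: "v \<le> p" unfolding v_def BB_def gg_def
          by (rule postB_le) (use e xy gy in \<open>auto simp: gg_def\<close>)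
        have ub: "u \<le> b" unfolding u_def b_def AA_def hh_def
          by (rule postA_mono) (use e xy hy hx in \<open>auto simp: hh_def\<close>)
        have av: "a \<le> v" unfolding v_def a_def BB_def gg_def
          by (rule postB_mono) (use e xy gy gx in \<open>auto simp: gg_def\<close>)
        have w: "hh y * u + (1 - hh y) * v = p"
          using hy gy sumAB[of y] by (simp add: u_def v_def g)
        have hy1: "hh y \<le> 1" using gy sumh[of y] by simp
        have "hh x * l b + (1 - hh x) * l a \<le> hh y * l u + (1 - hh y) * l v"
          by (rule jensen2[OF cc a0 b1]) (use ap pb lam pu vp ub av w hy hy1 in auto)
        then show ?thesis by (simp add: a_def b_def u_def v_def g)
      qed
    qed
  qed
qed


lemma sum_lik_split:
  fixes P :: "('c::finite \<Rightarrow> bool) pmf"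
  shows "(\<Sum>s\<in>S. pmf P s * obs_lik eFA eFS (s k) b)
     = obs_lik eFA eFS True b * (\<Sum>s\<in>S \<inter> {s. s k}. pmf P s)
       + obs_lik eFA eFS False b * (\<Sum>s\<in>S \<inter> - {s. s k}. pmf P s)"
proof -
  have "(\<Sum>s\<in>S. pmf P s * obs_lik eFA eFS (s k) b)
      = (\<Sum>s\<in>S. if s k then obs_lik eFA eFS True b * pmf P s else obs_lik eFA eFS False b * pmf P s)"
    by (rule sum.cong) auto
  also have "\<dots> = (\<Sum>s\<in>S \<inter> {s. s k}. obs_lik eFA eFS True b * pmf P s)
      + (\<Sum>s\<in>S \<inter> - {s. s k}. obs_lik eFA eFS False b * pmf P s)"
    by (rule sum.If_cases) simp
  finally show ?thesis by (simp add: sum_distrib_left)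
qed

lemma series_vals:
  fixes P :: "('c::finite \<Rightarrow> bool) pmf"
  shows "obs_prob P eFA eFS k False = eFA + (1 - eFA - eFS) * p_comp P k"
    and "obs_prob P eFA eFS k True = 1 - eFA - (1 - eFA - eFS) * p_comp P k"
    and "joint_fail_obs series P eFA eFS k False = eFA * p_sys series P + (1 - eFA - eFS) * p_comp P k"
    and "joint_fail_obs series P eFA eFS k True = (1 - eFA) * p_sys series P - (1 - eFA - eFS) * p_comp P k"
    and "0 \<le> p_comp P k" "p_comp P k \<le> p_sys series P" "p_sys series P \<le> 1"
proof -
  define pk where "pk = p_comp P k"
  define ps where "ps = p_sys series P"
  have pk: "pk = (\<Sum>s\<in>{s. \<not> s k}. pmf P s)"
    by (simp add: pk_def p_comp_def measure_measure_pmf_finite)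
  have ps: "ps = (\<Sum>s\<in>{s. \<not> series s}. pmf P s)"
    by (simp add: ps_def p_sys_def measure_measure_pmf_finite)
  have tot: "(\<Sum>s\<in>UNIV. pmf P s) = 1" by (rule sum_pmf_eq_1) auto
  have U1: "UNIV \<inter> - {s. s k} = {s. \<not> s k}" by auto
  have U2: "(\<Sum>s\<in>UNIV \<inter> {s. s k}. pmf P s) = 1 - pk"
  proof -
    have "(\<Sum>s\<in>UNIV. pmf P s) = (\<Sum>s\<in>UNIV \<inter> {s. s k}. pmf P s) + (\<Sum>s\<in>UNIV \<inter> - {s. s k}. pmf P s)"
      by (rule sum.Int_Diff[of UNIV _ "{s. s k}", simplified Diff_eq]) simp
    then show ?thesis using tot pk U1 by simp
  qed
  have F1: "{s. \<not> series s} \<inter> - {s. s k} = {s. \<not> s k}" by (auto simp: series_def)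
  have F2: "(\<Sum>s\<in>{s. \<not> series s} \<inter> {s. s k}. pmf P s) = ps - pk"
  proof -
    have "(\<Sum>s\<in>{s. \<not> series s}. pmf P s) = (\<Sum>s\<in>{s. \<not> series s} \<inter> {s. s k}. pmf P s) + (\<Sum>s\<in>{s. \<not> series s} \<inter> - {s. s k}. pmf P s)"
      by (rule sum.Int_Diff[of _ _ "{s. s k}", simplified Diff_eq]) simp
    then show ?thesis using ps pk F1 by simp
  qed
  show "obs_prob P eFA eFS k False = eFA + (1 - eFA - eFS) * p_comp P k"
    unfolding obs_prob_def sum_lik_split U2 U1 pk_def[symmetric] pk[symmetric]
    by (simp add: obs_lik_def algebra_simps)
  show "obs_prob P eFA eFS k True = 1 - eFA - (1 - eFA - eFS) * p_comp P k"
    unfolding obs_prob_def sum_lik_split U2 U1 pk_def[symmetric] pk[symmetric]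
    by (simp add: obs_lik_def algebra_simps)
  show "joint_fail_obs series P eFA eFS k False = eFA * p_sys series P + (1 - eFA - eFS) * p_comp P k"
    unfolding joint_fail_obs_def sum_lik_split F2 F1 pk_def[symmetric] pk[symmetric] ps_def[symmetric]
    by (simp add: obs_lik_def algebra_simps)
  show "joint_fail_obs series P eFA eFS k True = (1 - eFA) * p_sys series P - (1 - eFA - eFS) * p_comp P k"
    unfolding joint_fail_obs_def sum_lik_split F2 F1 pk_def[symmetric] pk[symmetric] ps_def[symmetric]
    by (simp add: obs_lik_def algebra_simps)
  show "0 \<le> p_comp P k" by (simp add: p_comp_def)
  show "p_comp P k \<le> p_sys series P"
    unfolding p_comp_def p_sys_def by (rule measure_pmf.finite_measure_mono) (auto simp: series_def)
  show "p_sys series P \<le> 1" by (simp add: p_sys_def)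
qed

lemma LG_eq:
  fixes P :: "('c::finite \<Rightarrow> bool) pmf"
  shows "LG_post l series P eFA eFS k =
     (eFA + (1 - eFA - eFS) * p_comp P k) * l ((eFA * p_sys series P + (1 - eFA - eFS) * p_comp P k) / (eFA + (1 - eFA - eFS) * p_comp P k))
   + (1 - (eFA + (1 - eFA - eFS) * p_comp P k)) * l (((1 - eFA) * p_sys series P - (1 - eFA - eFS) * p_comp P k) / (1 - (eFA + (1 - eFA - eFS) * p_comp P k)))"
proof -
  have e: "\<And>h x::real. (if h \<noteq> 0 then h * x else 0) = h * x" by simp
  have d: "1 - eFA - (1 - eFA - eFS) * p_comp P k = 1 - (eFA + (1 - eFA - eFS) * p_comp P k)" by simp
  show ?thesis unfolding LG_post_def Let_def e h_comp_def post_fail_def series_vals d ..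
qed

theorem mainTheorem3:
  fixes P :: "('c::finite \<Rightarrow> bool) pmf" and eFA eFS :: real and i j :: 'c
  assumes "0 \<le> eFA" and "eFA < 1/2" and "0 \<le> eFS" and "eFS < 1/2"
    and "p_comp P i \<ge> p_comp P j"
  shows "((\<forall>k\<in>{i, j}. \<forall>b. obs_prob P eFA eFS k b > 0) \<longrightarrow>
           post_fail series P eFA eFS i True \<le> post_fail series P eFA eFS j True \<and>
           post_fail series P eFA eFS j True \<le> post_fail series P eFA eFS j False \<and>
           post_fail series P eFA eFS j False \<le> post_fail series P eFA eFS i False)
       \<and> (\<forall>l. concave_on {0..1} l \<longrightarrow>
              VoI_G l series P eFA eFS i \<ge> VoI_G l series P eFA eFS j)"
proof (intro conjI impI allI)
  assume pos: "\<forall>k\<in>{i, j}. \<forall>b. obs_prob P eFA eFS k b > 0"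
  have iF: "eFA + (1 - eFA - eFS) * p_comp P i > 0" using pos series_vals(1)[of P eFA eFS i] spec[OF bspec[OF pos, of i], of False] by simp
  have iT: "1 - eFA - (1 - eFA - eFS) * p_comp P i > 0" using pos series_vals(2)[of P eFA eFS i] spec[OF bspec[OF pos, of i], of True] by simp
  have jF: "eFA + (1 - eFA - eFS) * p_comp P j > 0" using pos series_vals(1)[of P eFA eFS j] spec[OF bspec[OF pos, of j], of False] by simp
  have jT: "1 - eFA - (1 - eFA - eFS) * p_comp P j > 0" using pos series_vals(2)[of P eFA eFS j] spec[OF bspec[OF pos, of j], of True] by simp
  have ps1: "p_sys series P \<le> 1" and pj0: "0 \<le> p_comp P j" by (rule series_vals)+
  show "post_fail series P eFA eFS i True \<le> post_fail series P eFA eFS j True"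
    unfolding post_fail_def series_vals
    by (rule postB_mono) (use assms iT jT ps1 in auto)
  show "post_fail series P eFA eFS j True \<le> post_fail series P eFA eFS j False"
  proof -
    have "post_fail series P eFA eFS j True \<le> p_sys series P"
      unfolding post_fail_def series_vals by (rule postB_le) (use assms jT ps1 pj0 in auto)
    moreover have "p_sys series P \<le> post_fail series P eFA eFS j False"
      unfolding post_fail_def series_vals by (rule postA_ge) (use assms jF ps1 pj0 in auto)
    ultimately show ?thesis by linarith
  qed
  show "post_fail series P eFA eFS j False \<le> post_fail series P eFA eFS i False"
    unfolding post_fail_def series_vals
    by (rule postA_mono) (use assms iF jF ps1 in auto)
next
  fix l :: "real \<Rightarrow> real"
  assume cc: "concave_on {0..1} l"
  have v: "0 \<le> p_comp P j" "p_comp P i \<le> p_sys series P" "p_sys series P \<le> 1"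
    by (rule series_vals)+
  have "LG_post l series P eFA eFS i \<le> LG_post l series P eFA eFS j"
    unfolding LG_eq
    by (rule F_mono[OF cc assms(1-4)]) (use assms v in auto)
  then show "VoI_G l series P eFA eFS i \<ge> VoI_G l series P eFA eFS j"
    by (simp add: VoI_G_def)
qed

end
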